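(* Let $\Sigma$ be a real symmetric positive semidefinite $n\times n$ matrix which is irreducible. If $\Sigma\preceq_e 0$, then ${\operatorname{mr}}(\Sigma)=n-1$, where \[{\operatorname{mr}}(\Sigma)=\min\{\operatorname{rank}(\hat\Sigma)\mid \Sigma=\tilde\Sigma+\hat\Sigma,\ \hat\Sigma\text{ real symmetric positive semidefinite},\ \tilde\Sigma\text{ real diagonal}\}.\]
   Context: A square matrix is irreducible if it cannot be brought into block-diagonal form (with at least two diagonal blocks) by a simultaneous permutation of its rows and columns. For a real square matrix $M$, $M\preceq_e 0$ means that the off-diagonal entries of $M$ are all $\le 0$, or can be made so by changing the signs of selected rows and the corresponding columns (i.e. there is a diagonal matrix $P$ with diagonal entries $\pm1$ such that $PMP$ has all off-diagonal entries $\le 0$). In the definition of ${\operatorname{mr}}$ the diagonal matrix $\tilde\Sigma$ is not required to be positive semidefinite. *)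

theory Defs
  imports "HOL-Analysis.Analysis"
begin

definition symmetric_mat :: "real^'n^'n \<Rightarrow> bool" where
  "symmetric_mat M \<longleftrightarrow> transpose M = M"

definition psd_mat :: "real^'n^'n \<Rightarrow> bool" where
  "psd_mat M \<longleftrightarrow> symmetric_mat M \<and> (\<forall>x::real^'n. 0 \<le> x \<bullet> (M *v x))"

definition diagonal_mat :: "real^'n^'n \<Rightarrow> bool" where
  "diagonal_mat D \<longleftrightarrow> (\<forall>i j. i \<noteq> j \<longrightarrow> D $ i $ j = 0)"

text \<open>Irreducible: no simultaneous row/column permutation brings M into block-diagonal
 form with at least two blocks, i.e. there is no splitting of the index set into a nonempty
 proper subset I and its complement with all entries between I and its complement zero.\<close>
definition irreducible_mat :: "real^'n^'n \<Rightarrow> bool" where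
  "irreducible_mat M \<longleftrightarrow>
     \<not> (\<exists>I::'n set. I \<noteq> {} \<and> I \<noteq> UNIV \<and>
          (\<forall>i j. i \<in> I \<and> j \<notin> I \<longrightarrow> M $ i $ j = 0 \<and> M $ j $ i = 0))"

text \<open>M \<preceq>_e 0: there is a diagonal signature matrix P (entries \<plusminus>1 on the diagonal)
 such that P M P has all off-diagonal entries \<le> 0.\<close>
definition sign_nonpos_off_diag :: "real^'n^'n \<Rightarrow> bool" where
  "sign_nonpos_off_diag M \<longleftrightarrow>
     (\<exists>P::real^'n^'n. diagonal_mat P \<and> (\<forall>i. P $ i $ i = 1 \<or> P $ i $ i = -1) \<and>
        (\<forall>i j. i \<noteq> j \<longrightarrow> (P ** M ** P) $ i $ j \<le> 0))"

definition mr :: "real^'n^'n \<Rightarrow> nat" where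
  "mr S = (LEAST r. \<exists>D H. S = D + H \<and> psd_mat H \<and> diagonal_mat D \<and> r = rank H)"

end

theory Submission imports Defs begin

lemma qf_sum: "(x::real^'n) \<bullet> (A *v y) = (\<Sum>i\<in>UNIV. \<Sum>j\<in>UNIV. x$i * A$i$j * y$j)"
  by (simp add: inner_vec_def matrix_vector_mult_def sum_distrib_left mult.assoc)

lemma sym_inner:
  assumes "symmetric_mat H"
  shows "(y::real^'n) \<bullet> (H *v x) = x \<bullet> (H *v y)"
proof -
  have "y \<bullet> (H *v x) = (transpose H *v y) \<bullet> x"
    by (simp add: transpose_matrix_vector dot_lmul_matrix)
  also have "\<dots> = x \<bullet> (H *v y)" using assms by (simp add: symmetric_mat_def inner_commute)
  finally show ?thesis .
qed

lemma psd_ker: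
  assumes "psd_mat H" "(x::real^'n) \<bullet> (H *v x) = 0"
  shows "H *v x = 0"
proof -
  define y where "y = H *v x"
  define a where "a = y \<bullet> y"
  define b where "b = y \<bullet> (H *v y)"
  have sym: "symmetric_mat H" and nn: "\<And>z. 0 \<le> z \<bullet> (H *v z)" using assms(1) by (auto simp: psd_mat_def)
  have b0: "0 \<le> b" unfolding b_def by (rule nn)
  have exp: "0 \<le> 2*c*a + c^2*b" for c
  proof -
    have "0 \<le> (x + c *\<^sub>R y) \<bullet> (H *v (x + c *\<^sub>R y))" by (rule nn)
    also have "\<dots> = x \<bullet> (H *v x) + c * (x \<bullet> (H *v y)) + c * (y \<bullet> (H *v x)) + c^2 * b"
      by (simp add: matrix_vector_right_distrib matrix_vector_mult_scaleR inner_add_left inner_add_right b_def power2_eq_square algebra_simps)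
    also have "\<dots> = 2*c*a + c^2*b"
      using sym_inner[OF sym, of x y] assms(2) by (simp add: a_def y_def)
    finally show ?thesis .
  qed
  have "a = 0"
  proof (rule ccontr)
    assume "a \<noteq> 0"
    then have ap: "a > 0" unfolding a_def by simp
    have "0 \<le> 2*(-a/(b+1))*a + (-a/(b+1))^2*b" by (rule exp)
    moreover have "2*(-a/(b+1))*a + (-a/(b+1))^2*b = a^2 * (-b-2)/(b+1)^2"
      using b0 by (simp add: divide_simps power2_eq_square) (simp add: algebra_simps)
    moreover have "a^2 * (-b-2)/(b+1)^2 < 0" using ap b0
      by (intro divide_neg_pos mult_pos_neg) auto
    ultimately show False by linarith
  qed
  then show ?thesis unfolding a_def y_def by simp
qed

lemma termwise:
  fixes pi pj h xi xj :: real
  assumes "pi = 1 \<or> pi = -1" "pj = 1 \<or> pj = -1" "pi * pj * h \<le> 0"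
  shows "pi * \<bar>xi\<bar> * h * (pj * \<bar>xj\<bar>) \<le> xi * h * xj"
proof -
  have s: "pi * pj = 1 \<or> pi * pj = -1" using assms(1,2) by auto
  have s2: "(pi * pj) * (pi * pj) = 1" using s by auto
  have l: "pi * \<bar>xi\<bar> * h * (pj * \<bar>xj\<bar>) = (pi*pj*h) * \<bar>xi * xj\<bar>"
    by (simp add: abs_mult algebra_simps)
  have r: "xi * h * xj = (pi*pj*h) * ((pi*pj) * (xi * xj))"
    using s2 by (simp add: algebra_simps)
  have "(pi*pj) * (xi * xj) \<le> \<bar>xi * xj\<bar>" using s by auto
  then have "(pi*pj*h) * \<bar>xi * xj\<bar> \<le> (pi*pj*h) * ((pi*pj) * (xi * xj))"
    using assms(3) by (rule mult_left_mono_neg)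
  then show ?thesis by (simp only: l r)
qed

lemma full_support:
  fixes H :: "real^'n^'n" and p :: "'n \<Rightarrow> real"
  assumes psd: "psd_mat H" and irr: "irreducible_mat H"
    and p: "\<forall>i. p i = 1 \<or> p i = -1"
    and sgn: "\<forall>i j. i \<noteq> j \<longrightarrow> p i * p j * H$i$j \<le> 0"
    and ker: "H *v x = 0" and nz: "x \<noteq> 0"
  shows "x$k \<noteq> 0"
proof (rule ccontr)
  assume xk: "\<not> x$k \<noteq> 0"
  define y where "y = (\<chi> i. p i * \<bar>x$i\<bar>)"
  have sym: "symmetric_mat H" using psd by (simp add: psd_mat_def)
  have tw: "p i * \<bar>x$i\<bar> * H$i$j * (p j * \<bar>x$j\<bar>) \<le> x$i * H$i$j * x$j" for i j
  proof (cases "i = j")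
    case True
    have "p i * p i = 1" using p by (metis mult_1 mult_minus1 minus_minus)
    moreover have "\<bar>x$i\<bar> * \<bar>x$i\<bar> = x$i * x$i" by (simp add: abs_mult_self_eq)
    ultimately have "p i * \<bar>x$i\<bar> * H$i$i * (p i * \<bar>x$i\<bar>) = x$i * H$i$i * x$i"
      by (metis (no_types, lifting) mult.assoc mult.commute mult_1)
    then show ?thesis using True by (simp only: order_refl)
  next
    case False
    then show ?thesis using termwise[of "p i" "p j" "H$i$j"] p sgn by blast
  qed
  have "y \<bullet> (H *v y) \<le> x \<bullet> (H *v x)"
    unfolding qf_sum y_def using tw by (simp add: sum_mono)
  also have "\<dots> = 0" using ker by simp
  finally have "y \<bullet> (H *v y) = 0" using psd by (simp add: psd_mat_def eq_iff)
  then have Hy: "H *v y = 0" using psd_ker[OF psd] by blast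
  define I where "I = {i. x$i = 0}"
  have zero: "H$i$j = 0 \<and> H$j$i = 0" if "i \<in> I" "j \<notin> I" for i j
  proof -
    have xi: "x$i = 0" and xj: "x$j \<noteq> 0" using that by (auto simp: I_def)
    have "(H *v y)$i = 0" using Hy by simp
    then have "(\<Sum>l\<in>UNIV. H$i$l * y$l) = 0" by (simp add: matrix_vector_mult_def)
    then have "(\<Sum>l\<in>UNIV. - (p i * H$i$l * y$l)) = 0"
      by (simp add: sum_negf sum_distrib_left[symmetric] mult.assoc)
    moreover have "\<forall>l\<in>UNIV. 0 \<le> - (p i * H$i$l * y$l)"
    proof
      fix l
      show "0 \<le> - (p i * H$i$l * y$l)"
      proof (cases "l = i")
        case True then show ?thesis using xi by (simp add: y_def)
      next
        case False
        have "p i * p l * H$i$l * \<bar>x$l\<bar> \<le> 0" using sgn False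
          by (simp add: mult_nonpos_nonneg)
        then show ?thesis by (simp add: y_def algebra_simps)
      qed
    qed
    ultimately have "\<forall>l\<in>UNIV. - (p i * H$i$l * y$l) = 0"
      using sum_nonneg_eq_0_iff[of UNIV "\<lambda>l. - (p i * H$i$l * y$l)"] by simp
    then have "p i * H$i$j * (p j * \<bar>x$j\<bar>) = 0" by (auto simp: y_def)
    moreover have "p i \<noteq> 0" "p j \<noteq> 0" using p by (metis zero_neq_one zero_neq_neg_one)+
    ultimately have "H$i$j = 0" using xj by simp
    moreover have "H$j$i = H$i$j" using sym
      unfolding symmetric_mat_def by (metis transpose_def vec_lambda_beta)
    ultimately show ?thesis by simp
  qed
  have "I \<noteq> {}" using xk by (auto simp: I_def)
  moreover have "I \<noteq> UNIV" using nz by (auto simp: I_def vec_eq_iff)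
  ultimately show False using irr zero unfolding irreducible_mat_def by blast
qed

lemma rank_lower:
  fixes H :: "real^'n^'n" and p :: "'n \<Rightarrow> real"
  assumes psd: "psd_mat H" and irr: "irreducible_mat H"
    and p: "\<forall>i. p i = 1 \<or> p i = -1"
    and sgn: "\<forall>i j. i \<noteq> j \<longrightarrow> p i * p j * H$i$j \<le> 0"
  shows "CARD('n) - 1 \<le> rank H"
proof (cases "\<exists>v. v \<noteq> 0 \<and> H *v v = 0")
  case False
  then have "rank H = CARD('n)" using matrix_nonfull_linear_equations_eq by blast
  then show ?thesis by simp
next
  case True
  then obtain v where v: "v \<noteq> 0" "H *v v = 0" by blast
  define k :: 'n where "k = undefined"
  have vk: "v$k \<noteq> 0" using full_support[OF psd irr p sgn v(2) v(1)] .
  have kerspan: "\<exists>c. w = c *\<^sub>R v" if "H *v w = 0" for w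
  proof -
    define z where "z = w - (w$k / v$k) *\<^sub>R v"
    have "H *v z = 0" using that v(2) by (simp add: z_def matrix_vector_mult_diff_distrib matrix_vector_mult_scaleR)
    moreover have "z$k = 0" using vk by (simp add: z_def)
    ultimately have "z = 0" using full_support[OF psd irr p sgn] by blast
    then show ?thesis by (auto simp: z_def)
  qed
  define Hp where "Hp = {x::real^'n. v \<bullet> x = 0}"
  have spanHp: "span Hp = Hp" unfolding Hp_def by (simp add: subspace_hyperplane)
  have inj: "inj_on ((*v) H) (span Hp)"
    unfolding spanHp
  proof (rule inj_onI)
    fix a b assume a: "a \<in> Hp" and b: "b \<in> Hp" and eq: "H *v a = H *v b"
    then have "H *v (a - b) = 0" by (simp add: matrix_vector_mult_diff_distrib)
    then obtain c where c: "a - b = c *\<^sub>R v" using kerspan by blast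
    have "0 = v \<bullet> (a - b)" using a b by (simp add: Hp_def inner_diff_right)
    also have "\<dots> = c * (v \<bullet> v)" using c by simp
    finally have "c = 0" using v(1) by simp
    then show "a = b" using c by simp
  qed
  have "dim ((*v) H ` Hp) = dim Hp"
    by (rule dim_image_eq[OF matrix_vector_mul_linear inj])
  also have "dim Hp = CARD('n) - 1" unfolding Hp_def using dim_hyperplane[OF v(1)] by (simp add: DIM_cart)
  finally have "CARD('n) - 1 = dim ((*v) H ` Hp)" by simp
  also have "\<dots> \<le> dim (range (\<lambda>x. H *v x))" by (rule dim_subset) auto
  also have "\<dots> = rank H" by (simp add: rank_dim_range)
  finally show ?thesis .
qed

lemma sum_single:
  fixes g :: "'n::finite \<Rightarrow> real"
  assumes "\<And>k. k \<noteq> i \<Longrightarrow> g k = 0"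
  shows "(\<Sum>k\<in>UNIV. g k) = g i"
proof -
  have "(\<Sum>k\<in>UNIV. g k) = g i + (\<Sum>k\<in>UNIV - {i}. g k)"
    by (simp add: sum.remove)
  also have "(\<Sum>k\<in>UNIV - {i}. g k) = 0" using assms by (simp add: sum.neutral)
  finally show ?thesis by simp
qed

lemma diag_prod:
  assumes "diagonal_mat P"
  shows "(P ** S ** P) $ i $ j = P$i$i * S$i$j * P$j$j"
proof -
  have d: "a \<noteq> b \<Longrightarrow> P$a$b = 0" for a b using assms by (auto simp: diagonal_mat_def)
  have "(P ** S) $ i $ l = P$i$i * S$i$l" for l
    unfolding matrix_matrix_mult_def vec_lambda_beta
    by (rule sum_single) (use d in auto)
  then show ?thesis
    unfolding matrix_matrix_mult_def vec_lambda_beta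
    by (subst sum_single[where i=j]) (use d in auto)
qed

lemma rank_upper:
  fixes S :: "real^'n^'n"
  assumes "psd_mat S"
  shows "\<exists>D H. S = D + H \<and> psd_mat H \<and> diagonal_mat D \<and> rank H \<le> CARD('n) - 1"
proof -
  have "\<exists>v\<in>sphere (0::real^'n) 1. \<forall>w\<in>sphere 0 1. v \<bullet> (S *v v) \<le> w \<bullet> (S *v w)"
  proof (rule continuous_attains_inf)
    have "axis undefined 1 \<in> sphere (0::real^'n) 1" by (simp add: norm_axis_1)
    then show "sphere (0::real^'n) 1 \<noteq> {}" by blast
    show "continuous_on (sphere 0 1) (\<lambda>v::real^'n. v \<bullet> (S *v v))"
      by (intro continuous_intros matrix_vector_mult_linear_continuous_on)
  qed auto
  then obtain v :: "real^'n" where v1: "norm v = 1" and vmin: "\<And>w. norm w = 1 \<Longrightarrow> v \<bullet> (S *v v) \<le> w \<bullet> (S *v w)"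
    by auto
  define t where "t = v \<bullet> (S *v v)"
  define H where "H = S - mat t"
  have matv: "mat t *v x = t *\<^sub>R x" for x :: "real^'n"
    unfolding vec_eq_iff matrix_vector_mult_def mat_def vec_lambda_beta
    by (intro allI, subst sum_single) auto
  have qH: "x \<bullet> (H *v x) = x \<bullet> (S *v x) - t * (x \<bullet> x)" for x
    by (simp add: H_def matrix_vector_mult_diff_rdistrib matv inner_diff_right)
  have nn: "0 \<le> x \<bullet> (H *v x)" for x
  proof (cases "x = 0")
    case True then show ?thesis by simp
  next
    case False
    define u where "u = (1 / norm x) *\<^sub>R x"
    have "norm u = 1" using False by (simp add: u_def)
    then have "t \<le> u \<bullet> (S *v u)" using vmin t_def by blast
    also have "u \<bullet> (S *v u) = (x \<bullet> (S *v x)) / (norm x)^2"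
      by (simp add: u_def matrix_vector_mult_scaleR power2_eq_square)
    finally have "t * (norm x)^2 \<le> x \<bullet> (S *v x)" using False by (simp add: field_simps)
    then show ?thesis by (simp add: qH power2_norm_eq_inner)
  qed
  have symH: "symmetric_mat H" using assms
    by (simp add: H_def psd_mat_def symmetric_mat_def vec_eq_iff transpose_def mat_def)
  have psdH: "psd_mat H" using symH nn by (simp add: psd_mat_def)
  have "v \<bullet> (H *v v) = 0" using v1 by (simp add: qH t_def power2_norm_eq_inner[symmetric])
  then have "H *v v = 0" using psd_ker[OF psdH] by blast
  moreover have "v \<noteq> 0" using v1 by auto
  ultimately have "rank H \<noteq> CARD('n)" using matrix_nonfull_linear_equations_eq by blast
  moreover have "rank H \<le> CARD('n)" using rank_bound[of H] by simp
  ultimately have "rank H \<le> CARD('n) - 1" by simp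
  moreover have "S = mat t + H" by (simp add: H_def)
  moreover have "diagonal_mat (mat t :: real^'n^'n)" by (simp add: diagonal_mat_def mat_def)
  ultimately show ?thesis using psdH by blast
qed

theorem corollary2:
  fixes S :: "real^'n^'n"
  assumes "psd_mat S"
    and "irreducible_mat S"
    and "sign_nonpos_off_diag S"
  shows "mr S = CARD('n) - 1"
proof -
  obtain P :: "real^'n^'n" where P0: "diagonal_mat P \<and> (\<forall>i. P $ i $ i = 1 \<or> P $ i $ i = -1) \<and>
      (\<forall>i j. i \<noteq> j \<longrightarrow> (P ** S ** P) $ i $ j \<le> 0)"
    using assms(3) unfolding sign_nonpos_off_diag_def by (erule exE)
  have P: "diagonal_mat P" "\<forall>i. P $ i $ i = 1 \<or> P $ i $ i = -1"
      "\<forall>i j. i \<noteq> j \<longrightarrow> (P ** S ** P) $ i $ j \<le> 0" using P0 by simp_all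
  define p where "p i = P$i$i" for i
  have lower: "CARD('n) - 1 \<le> rank H" if "S = D + H" "psd_mat H" "diagonal_mat D" for D H
  proof (rule rank_lower[of H p])
    have off: "H$i$j = S$i$j" if "i \<noteq> j" for i j
      using \<open>S = D + H\<close> \<open>diagonal_mat D\<close> that by (simp add: diagonal_mat_def)
    show "psd_mat H" by fact
    show "\<forall>i. p i = 1 \<or> p i = -1" using P(2) by (simp add: p_def)
    show "\<forall>i j. i \<noteq> j \<longrightarrow> p i * p j * H$i$j \<le> 0"
    proof (intro allI impI)
      fix i j :: 'n assume ij: "i \<noteq> j"
      have "(P ** S ** P) $ i $ j \<le> 0" using P(3) ij by blast
      moreover have "p i * p j * H$i$j = P$i$i * S$i$j * P$j$j"
        unfolding p_def off[OF ij] by (simp only: mult_ac)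
      ultimately show "p i * p j * H$i$j \<le> 0" using diag_prod[OF P(1), of S i j] by simp
    qed
    show "irreducible_mat H"
      unfolding irreducible_mat_def
    proof
      assume "\<exists>I::'n set. I \<noteq> {} \<and> I \<noteq> UNIV \<and>
          (\<forall>i j. i \<in> I \<and> j \<notin> I \<longrightarrow> H $ i $ j = 0 \<and> H $ j $ i = 0)"
      then obtain I :: "'n set" where I: "I \<noteq> {}" "I \<noteq> UNIV"
          "\<forall>i j. i \<in> I \<and> j \<notin> I \<longrightarrow> H $ i $ j = 0 \<and> H $ j $ i = 0" by blast
      have "\<forall>i j. i \<in> I \<and> j \<notin> I \<longrightarrow> S $ i $ j = 0 \<and> S $ j $ i = 0"
      proof (intro allI impI)
        fix i j assume ij: "i \<in> I \<and> j \<notin> I"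
        then have "i \<noteq> j" by auto
        then show "S $ i $ j = 0 \<and> S $ j $ i = 0" using I(3) ij off[of i j] off[of j i] by auto
      qed
      then show False using assms(2) I(1,2) unfolding irreducible_mat_def by blast
    qed
  qed
  obtain D0 H0 where h0: "S = D0 + H0" "psd_mat H0" "diagonal_mat D0" "rank H0 \<le> CARD('n) - 1"
    using rank_upper[OF assms(1)] by blast
  have r0: "rank H0 = CARD('n) - 1" using lower[OF h0(1-3)] h0(4) by simp
  show ?thesis unfolding mr_def
  proof (rule Least_equality)
    show "\<exists>D H. S = D + H \<and> psd_mat H \<and> diagonal_mat D \<and> CARD('n) - 1 = rank H"
      by (intro exI[of _ D0] exI[of _ H0]) (simp add: h0 r0)
    show "CARD('n) - 1 \<le> y" if "\<exists>D H. S = D + H \<and> psd_mat H \<and> diagonal_mat D \<and> y = rank H" for y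
    proof -
      from that obtain D H where "S = D + H" "psd_mat H" "diagonal_mat D" "y = rank H" by blast
      then show ?thesis using lower[of D H] by simp
    qed
  qed
qed

end
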